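(* Let $k\ge3$ and let $\sigma=\sigma_1\varepsilon_1\sigma_2\cdots\varepsilon_{k-1}\sigma_k$ be a generalized pattern of length $k$ such that for some $i$ both $\varepsilon_i$ and $\varepsilon_{i+1}$ are empty (i.e., $\sigma$ has three consecutive elements $\sigma_i\sigma_{i+1}\sigma_{i+2}$ with no dash between them). Then there exist constants $0<c,d<1$ such that $c^n n!<\alpha_n(\sigma)<d^n n!$ for all $n\ge k$.
   Context: $\mathfrak S_n$ is the symmetric group on $\{1,\dots,n\}$, permutations written in one-line notation. A generalized pattern of length $m$ is a permutation $\sigma_1\cdots\sigma_m\in\mathfrak S_m$ together with, for each $j=1,\dots,m-1$, a symbol $\varepsilon_j$ which is either a dash "-" or empty; write it $\sigma_1\varepsilon_1\sigma_2\cdots\varepsilon_{m-1}\sigma_m$. A permutation $\pi\in\mathfrak S_n$ contains this pattern if there are indices $i_1<\dots<i_m$ such that (i) whenever $\varepsilon_j$ is empty, $i_{j+1}=i_j+1$, and (ii) for all $a,b$, $\pi_{i_a}<\pi_{i_b}$ iff $\sigma_a<\sigma_b$; otherwise $\pi$ avoids it. $\alpha_n(\sigma)$ is the number of permutations in $\mathfrak S_n$ avoiding $\sigma$. *)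

theory Defs
  imports Complex_Main
begin

definition is_perm :: "nat \<Rightarrow> nat list \<Rightarrow> bool" where
  "is_perm n xs \<longleftrightarrow> distinct xs \<and> set xs = {1..n}"

text \<open>A generalized pattern is a pair (sigma, eps): sigma a permutation of {1..m}
  and eps a list of length m-1, where eps ! j = True means the symbol between
  positions j and j+1 (0-based) is empty (adjacency required), False means a dash.\<close>
definition is_gen_pattern :: "nat list \<Rightarrow> bool list \<Rightarrow> bool" where
  "is_gen_pattern sigma eps \<longleftrightarrow> is_perm (length sigma) sigma \<and> length eps = length sigma - 1"

definition contains_gpat :: "nat list \<Rightarrow> nat list \<Rightarrow> bool list \<Rightarrow> bool" where
  "contains_gpat p sigma eps \<longleftrightarrow>
     (\<exists>idx :: nat \<Rightarrow> nat.
        strict_mono_on {..<length sigma} idx \<and>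
        (\<forall>a<length sigma. idx a < length p) \<and>
        (\<forall>j. Suc j < length sigma \<longrightarrow> eps ! j \<longrightarrow> idx (Suc j) = Suc (idx j)) \<and>
        (\<forall>a<length sigma. \<forall>b<length sigma.
            (p ! (idx a) < p ! (idx b)) \<longleftrightarrow> (sigma ! a < sigma ! b)))"

definition alpha :: "nat \<Rightarrow> nat list \<Rightarrow> bool list \<Rightarrow> nat" where
  "alpha n sigma eps = card {p. is_perm n p \<and> \<not> contains_gpat p sigma eps}"

end

theory Submission
  imports Defs "HOL-Combinatorics.Multiset_Permutations"
begin


definition emb :: "nat set \<Rightarrow> nat \<Rightarrow> nat" where
  "emb C x = sorted_list_of_set C ! (x - 1)"

lemma emb_less:
  assumes "finite C" "x \<in> {1..card C}" "y \<in> {1..card C}"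
  shows "emb C x < emb C y \<longleftrightarrow> x < y"
proof -
  let ?xs = "sorted_list_of_set C"
  have s: "sorted_wrt (<) ?xs" by simp
  have l: "length ?xs = card C" using assms by simp
  have *: "emb C a < emb C b" if "a < b" "a \<in> {1..card C}" "b \<in> {1..card C}" for a b
    using sorted_wrt_nth_less[OF s, of "a-1" "b-1"] that l unfolding emb_def by auto
  show ?thesis using *[of x y] *[of y x] assms by (cases "x < y"; cases "y < x") auto
qed

lemma emb_mem:
  assumes "finite C" "x \<in> {1..card C}"
  shows "emb C x \<in> C"
proof -
  have "sorted_list_of_set C ! (x - 1) \<in> set (sorted_list_of_set C)"
    using assms by (intro nth_mem) auto
  then show ?thesis using assms unfolding emb_def by simp
qed

lemma emb_inj: "finite C \<Longrightarrow> inj_on (emb C) {1..card C}"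
  by (rule inj_onI) (metis emb_less nat_neq_iff)

lemma emb_image:
  assumes "finite C" shows "emb C ` {1..card C} = C"
proof -
  have "emb C ` {1..card C} \<subseteq> C" using emb_mem assms by auto
  moreover have "card (emb C ` {1..card C}) = card C"
    using card_image[OF emb_inj[OF assms]] by simp
  ultimately show ?thesis using assms by (simp add: card_subset_eq)
qed

lemma is_perm_alt: "is_perm n p \<longleftrightarrow> p \<in> permutations_of_set {1..n}"
  unfolding is_perm_def permutations_of_set_def by auto

lemma card_perms: "card {p. is_perm n p} = fact n"
  by (simp add: is_perm_alt)

lemma finite_perms: "finite {p. is_perm n p}"
proof -
  have "{p. is_perm n p} = permutations_of_set {1..n}" by (auto simp: is_perm_alt)
  moreover have "finite (permutations_of_set {1..n})"
    by (metis card_perms calculation card_ge_0_finite fact_gt_zero)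
  ultimately show ?thesis by simp
qed

lemma perm_nth: "is_perm n p \<Longrightarrow> a < length p \<Longrightarrow> p ! a \<in> {1..n}"
  unfolding is_perm_def by (metis nth_mem)

lemma perm_len: "is_perm n p \<Longrightarrow> length p = n"
  unfolding is_perm_def by (metis card_atLeastAtMost diff_Suc_1 distinct_card)

definition Phi :: "nat \<Rightarrow> nat \<Rightarrow> nat list \<times> nat set \<times> nat list \<Rightarrow> nat list" where
  "Phi n L t = (case t of (p, S, r) \<Rightarrow> map (emb ({1..n+L} - S)) p @ map (emb S) r)"

definition Dom :: "nat \<Rightarrow> nat \<Rightarrow> (nat list \<times> nat set \<times> nat list) set" where
  "Dom n L = {p. is_perm n p} \<times> {S. S \<subseteq> {1..n+L} \<and> card S = L} \<times> {r. is_perm L r}"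

lemma cardC: "S \<subseteq> {1..n+L} \<Longrightarrow> card S = L \<Longrightarrow> card ({1..n+L} - S) = n"
  by (simp add: card_Diff_subset finite_subset)

lemma Phi_perm:
  assumes "(p, S, r) \<in> Dom n L"
  shows "is_perm (n+L) (Phi n L (p, S, r))"
proof -
  let ?C = "{1..n+L} - S"
  have p: "is_perm n p" and S: "S \<subseteq> {1..n+L}" "card S = L" and r: "is_perm L r"
    using assms unfolding Dom_def by simp_all
  have fS: "finite S" using S finite_subset by blast
  have cC: "card ?C = n" using cardC S by blast
  have sp: "set p = {1..card ?C}" using p cC by (simp add: is_perm_def)
  have sr: "set r = {1..card S}" using r S by (simp add: is_perm_def)
  have d1: "distinct (map (emb ?C) p)"
    using p emb_inj[of ?C] sp by (simp add: distinct_map is_perm_def)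
  have d2: "distinct (map (emb S) r)"
    using r emb_inj[OF fS] sr by (simp add: distinct_map is_perm_def)
  have s1: "set (map (emb ?C) p) = ?C" using emb_image[of ?C] sp by simp
  have s2: "set (map (emb S) r) = S" using emb_image[OF fS] sr by simp
  have "?C \<inter> S = {}" by blast
  moreover have "?C \<union> S = {1..n+L}" using S by blast
  ultimately show ?thesis unfolding Phi_def is_perm_def using d1 d2 s1 s2 by simp
qed

lemma Phi_inj: "inj_on (Phi n L) (Dom n L)"
proof (rule inj_onI)
  fix t t' assume t: "t \<in> Dom n L" and t': "t' \<in> Dom n L" and e: "Phi n L t = Phi n L t'"
  obtain p S r where tt: "t = (p, S, r)" by (cases t) auto
  obtain p' S' r' where tt': "t' = (p', S', r')" by (cases t') auto
  have p: "is_perm n p" and S: "S \<subseteq> {1..n+L}" "card S = L" and r: "is_perm L r"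
    using t unfolding tt Dom_def by simp_all
  have p': "is_perm n p'" and S': "S' \<subseteq> {1..n+L}" "card S' = L" and r': "is_perm L r'"
    using t' unfolding tt' Dom_def by simp_all
  have fS: "finite S" using S finite_subset by blast
  have lp: "length p = n" "length p' = n" using p p' perm_len by auto
  have e1: "map (emb ({1..n+L} - S)) p = map (emb ({1..n+L} - S')) p'"
    and e2: "map (emb S) r = map (emb S') r'"
  proof -
    have "map (emb ({1..n+L} - S)) p @ map (emb S) r = map (emb ({1..n+L} - S')) p' @ map (emb S') r'"
      using e unfolding tt tt' Phi_def by simp
    moreover have "length (map (emb ({1..n+L} - S)) p) = length (map (emb ({1..n+L} - S')) p')"
      using lp by simp
    ultimately show "map (emb ({1..n+L} - S)) p = map (emb ({1..n+L} - S')) p'"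
      "map (emb S) r = map (emb S') r'" by (simp_all add: append_eq_append_conv)
  qed
  have sr: "set r = {1..card S}" using r S(2) unfolding is_perm_def by simp
  have s2: "set (map (emb S) r) = S" using emb_image[OF fS] sr by simp
  have fS': "finite S'" using S' finite_subset by blast
  have sr': "set r' = {1..card S'}" using r' S'(2) unfolding is_perm_def by simp
  have s2': "set (map (emb S') r') = S'" using emb_image[OF fS'] sr' by simp
  have SS: "S' = S" using s2 s2' e2 by metis
  have u: "set r \<union> set r' = {1..card S}" using sr sr' SS by simp
  have "inj_on (emb S) (set r \<union> set r')" unfolding u by (rule emb_inj[OF fS])
  then have rr: "r = r'" using e2 unfolding SS using map_inj_on by blast
  have sp: "set p = {1..card ({1..n+L} - S)}" using p cardC[OF S] unfolding is_perm_def by simp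
  have sp': "set p' = {1..card ({1..n+L} - S)}" using p' cardC[OF S] unfolding is_perm_def by simp
  have "inj_on (emb ({1..n+L} - S)) (set p \<union> set p')" unfolding sp sp' Un_absorb
    by (rule emb_inj) simp
  then have "p = p'" using e1 unfolding SS using map_inj_on by blast
  note pp = this
  show "t = t'" using tt tt' SS rr pp by simp
qed



lemma finite_Sets: "finite {S. S \<subseteq> {1..N::nat} \<and> card S = L}"
  by (rule finite_subset[of _ "Pow {1..N}"]) auto

lemma card_Sets: "card {S. S \<subseteq> {1..n+L} \<and> card S = L} = (n + L) choose L"
  using n_subsets[of "{1..n+L}" L] by simp

lemma fact_split: "fact n * ((n + L) choose L) * fact L = (fact (n + L) :: nat)"
  using binomial_fact_lemma[of L "n+L"] by (simp add: algebra_simps)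

lemma card_Dom: "card (Dom n L) = fact (n + L)"
  unfolding Dom_def card_cartesian_product card_perms card_Sets
  using fact_split by (simp add: mult.assoc)

lemma finite_Dom: "finite (Dom n L)"
  unfolding Dom_def using finite_perms finite_Sets by blast

lemma Phi_image: "Phi n L ` Dom n L = {q. is_perm (n+L) q}"
proof (rule card_subset_eq)
  show "finite {q. is_perm (n+L) q}" by (rule finite_perms)
  show "Phi n L ` Dom n L \<subseteq> {q. is_perm (n+L) q}"
    using Phi_perm by auto
  show "card (Phi n L ` Dom n L) = card {q. is_perm (n+L) q}"
    using card_image[OF Phi_inj] card_Dom card_perms by simp
qed

lemma Dom_D:
  assumes "(p, S, r) \<in> Dom n L"
  shows "is_perm n p" "S \<subseteq> {1..n+L}" "card S = L" "is_perm L r"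
  using assms unfolding Dom_def by simp_all

lemma Dom_len: "(p, S, r) \<in> Dom n L \<Longrightarrow> length p = n \<and> length r = L"
  using Dom_D(1,4) perm_len by blast

lemma Phi_len: "(p, S, r) \<in> Dom n L \<Longrightarrow> length (Phi n L (p, S, r)) = n + L"
  using Dom_len[of p S r n L] unfolding Phi_def by simp

lemma Phi_nth1: "(p, S, r) \<in> Dom n L \<Longrightarrow> a < n \<Longrightarrow>
    Phi n L (p, S, r) ! a = emb ({1..n+L} - S) (p ! a)"
  using Dom_len[of p S r n L] unfolding Phi_def by (simp add: nth_append)

lemma Phi_nth2: "(p, S, r) \<in> Dom n L \<Longrightarrow> a < L \<Longrightarrow>
    Phi n L (p, S, r) ! (n + a) = emb S (r ! a)"
  using Dom_len[of p S r n L] unfolding Phi_def by (simp add: nth_append)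

lemma Phi_ord1:
  assumes "(p, S, r) \<in> Dom n L" "a < n" "b < n"
  shows "(Phi n L (p, S, r) ! a < Phi n L (p, S, r) ! b) \<longleftrightarrow> (p ! a < p ! b)"
proof -
  note D = Dom_D[OF assms(1)]
  have c: "card ({1..n+L} - S) = n" using cardC D by blast
  have f: "finite ({1..n+L} - S)" by simp
  have "p ! a \<in> {1..card ({1..n+L} - S)}" "p ! b \<in> {1..card ({1..n+L} - S)}"
    using perm_nth[OF D(1)] perm_len[OF D(1)] assms c by auto
  then show ?thesis using Phi_nth1[OF assms(1)] assms emb_less[OF f] by simp
qed

lemma Phi_ord2:
  assumes "(p, S, r) \<in> Dom n L" "a < L" "b < L"
  shows "(Phi n L (p, S, r) ! (n + a) < Phi n L (p, S, r) ! (n + b)) \<longleftrightarrow> (r ! a < r ! b)"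
proof -
  note D = Dom_D[OF assms(1)]
  have f: "finite S" using D(2) finite_subset by blast
  have "r ! a \<in> {1..card S}" "r ! b \<in> {1..card S}"
    using perm_nth[OF D(4)] perm_len[OF D(4)] assms D(3) by auto
  then show ?thesis using Phi_nth2[OF assms(1)] assms emb_less[OF f] by simp
qed

lemma contains_lift:
  assumes "(p, S, r) \<in> Dom n L" "contains_gpat p sigma eps"
  shows "contains_gpat (Phi n L (p, S, r)) sigma eps"
proof -
  obtain idx where i1: "strict_mono_on {..<length sigma} idx"
    and i2: "\<forall>a<length sigma. idx a < length p"
    and i3: "\<forall>j. Suc j < length sigma \<longrightarrow> eps ! j \<longrightarrow> idx (Suc j) = Suc (idx j)"
    and i4: "\<forall>a<length sigma. \<forall>b<length sigma. (p ! (idx a) < p ! (idx b)) \<longleftrightarrow> (sigma ! a < sigma ! b)"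
    using assms(2) unfolding contains_gpat_def by blast
  have lp: "length p = n" using perm_len Dom_D[OF assms(1)] by blast
  show ?thesis unfolding contains_gpat_def
  proof (intro exI[of _ idx] conjI allI impI)
    show "strict_mono_on {..<length sigma} idx" by (rule i1)
    fix a assume "a < length sigma"
    then show "idx a < length (Phi n L (p, S, r))" using i2 lp Phi_len[OF assms(1)] by force
  next
    fix j assume "Suc j < length sigma" "eps ! j"
    then show "idx (Suc j) = Suc (idx j)" using i3 by blast
  next
    fix a b assume ab: "a < length sigma" "b < length sigma"
    then show "(Phi n L (p, S, r) ! idx a < Phi n L (p, S, r) ! idx b) = (sigma ! a < sigma ! b)"
      using Phi_ord1[OF assms(1), of "idx a" "idx b"] i2 i4 lp by simp
  qed
qed

lemma contains_last:
  assumes "(p, S, sigma) \<in> Dom n (length sigma)"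
  shows "contains_gpat (Phi n (length sigma) (p, S, sigma)) sigma eps"
  unfolding contains_gpat_def
proof (intro exI[of _ "\<lambda>a. n + a"] conjI allI impI)
  show "strict_mono_on {..<length sigma} ((+) n)" by (auto simp: strict_mono_on_def)
  fix a assume "a < length sigma"
  then show "n + a < length (Phi n (length sigma) (p, S, sigma))" using Phi_len[OF assms] by simp
next
  fix j assume "Suc j < length sigma" "eps ! j"
  then show "n + Suc j = Suc (n + j)" by simp
next
  fix a b assume ab: "a < length sigma" "b < length sigma"
  then show "(Phi n (length sigma) (p, S, sigma) ! (n + a) < Phi n (length sigma) (p, S, sigma) ! (n + b))
      = (sigma ! a < sigma ! b)"
    using Phi_ord2[OF assms] by simp
qed



definition Av :: "nat list \<Rightarrow> bool list \<Rightarrow> nat \<Rightarrow> nat list set" where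
  "Av sigma eps n = {p. is_perm n p \<and> \<not> contains_gpat p sigma eps}"

lemma finite_Av: "finite (Av sigma eps n)"
  unfolding Av_def using finite_perms by (rule finite_subset[rotated]) auto

lemma Av_step:
  assumes sp: "is_perm (length sigma) sigma"
  shows "card (Av sigma eps (n + length sigma)) \<le>
     card (Av sigma eps n) * ((n + length sigma) choose length sigma) * (fact (length sigma) - 1)"
proof -
  define K where "K = length sigma"
  define T where "T = Av sigma eps n \<times> {S. S \<subseteq> {1..n+K} \<and> card S = K} \<times> ({r. is_perm K r} - {sigma})"
  have sub: "Av sigma eps (n + K) \<subseteq> Phi n K ` T"
  proof
    fix q assume q: "q \<in> Av sigma eps (n + K)"
    then have "q \<in> Phi n K ` Dom n K" unfolding Phi_image Av_def by simp
    then obtain p S r where t: "(p, S, r) \<in> Dom n K" and qe: "q = Phi n K (p, S, r)" by auto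
    have nc: "\<not> contains_gpat q sigma eps" using q unfolding Av_def by simp
    have "\<not> contains_gpat p sigma eps" using contains_lift[OF t] nc qe by blast
    moreover have "r \<noteq> sigma"
    proof
      assume "r = sigma"
      then show False using contains_last[of p S sigma n eps] t nc qe unfolding K_def by simp
    qed
    ultimately have "(p, S, r) \<in> T" using t unfolding T_def Dom_def Av_def by simp
    then show "q \<in> Phi n K ` T" using qe by blast
  qed
  have fT: "finite T" unfolding T_def using finite_Av finite_Sets finite_perms by blast
  have "card (Av sigma eps (n + K)) \<le> card (Phi n K ` T)"
    by (rule card_mono) (use fT sub in auto)
  also have "\<dots> \<le> card T" using fT by (rule card_image_le)
  also have "card T = card (Av sigma eps n) * ((n + K) choose K) * (fact K - 1)"
  proof -
    have "card ({r. is_perm K r} - {sigma}) = fact K - 1"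
      using card_Diff_singleton[of sigma "{r. is_perm K r}"] sp card_perms unfolding K_def by simp
    then show ?thesis unfolding T_def card_cartesian_product card_Sets by (simp add: mult.assoc)
  qed
  finally show ?thesis unfolding K_def .
qed

lemma Av_bound:
  assumes sp: "is_perm (length sigma) sigma" and k: "length sigma = k" "k \<ge> 1"
  shows "real (card (Av sigma eps n)) \<le> fact n * (1 - 1 / fact k) ^ (n div k)"
proof (induction n rule: less_induct)
  case (less n)
  show ?case
  proof (cases "n < k")
    case True
    have "card (Av sigma eps n) \<le> card {p. is_perm n p}"
      unfolding Av_def by (rule card_mono[OF finite_perms]) auto
    then have "card (Av sigma eps n) \<le> fact n" using card_perms[of n] by simp
    then have "real (card (Av sigma eps n)) \<le> fact n" by (metis of_nat_fact of_nat_le_iff)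
    then show ?thesis using True by simp
  next
    case False
    define m where "m = n - k"
    have nm: "n = m + k" using False m_def by simp
    have ndiv: "n div k = Suc (m div k)" using nm k(2) by simp
    have IH: "real (card (Av sigma eps m)) \<le> fact m * (1 - 1 / fact k) ^ (m div k)"
      using less k(2) nm by simp
    have st: "card (Av sigma eps n) \<le> card (Av sigma eps m) * (n choose k) * (fact k - 1)"
      using Av_step[OF sp, of eps m] k nm by simp
    have f1: "real (fact k - 1 :: nat) = fact k - 1"
      by (simp add: of_nat_diff)
    have fs: "real (fact m) * real (n choose k) * fact k = fact n"
      using fact_split[of m k] nm by (metis of_nat_fact of_nat_mult)
    have fk: "(fact k :: real) > 0" by simp
    have "real (card (Av sigma eps n)) \<le> real (card (Av sigma eps m)) * real (n choose k) * (fact k - 1)"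
      using st f1 by (metis of_nat_le_iff of_nat_mult)
    also have "\<dots> \<le> fact m * (1 - 1 / fact k) ^ (m div k) * real (n choose k) * (fact k - 1)"
      using IH by (intro mult_right_mono) (auto simp: fact_ge_1)
    also have "\<dots> = (real (fact m) * real (n choose k) * fact k) * (1 - 1 / fact k) ^ (m div k) * (1 - 1 / fact k)"
      using fk by (simp add: field_simps)
    also have "\<dots> = fact n * (1 - 1 / fact k) ^ (n div k)"
      unfolding fs ndiv by simp
    finally show ?thesis .
  qed
qed



definition tm :: "bool \<Rightarrow> bool \<Rightarrow> bool \<Rightarrow> nat list \<Rightarrow> nat \<Rightarrow> bool" where
  "tm x y z q j \<longleftrightarrow> (q ! j < q ! Suc j) = x \<and> (q ! Suc j < q ! Suc (Suc j)) = y \<and> (q ! j < q ! Suc (Suc j)) = z"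

definition good :: "bool \<Rightarrow> bool \<Rightarrow> bool \<Rightarrow> nat list \<Rightarrow> bool" where
  "good x y z q \<longleftrightarrow> (\<forall>j. Suc (Suc j) < length q \<longrightarrow> \<not> tm x y z q j) \<and>
     (2 \<le> length q \<longrightarrow> (q ! (length q - 2) < q ! (length q - 1)) = (\<not> x))"

definition Gs :: "bool \<Rightarrow> bool \<Rightarrow> bool \<Rightarrow> nat \<Rightarrow> nat list set" where
  "Gs x y z n = {q. is_perm n q \<and> good x y z q}"

definition rho :: "bool \<Rightarrow> bool \<Rightarrow> bool \<Rightarrow> nat list" where
  "rho x y z = (if x = y then (if x then [3,2,1] else [1,2,3])
     else if x then (if z then [2,3,1] else [1,3,2]) else (if z then [3,1,2] else [2,1,3]))"

lemma three: "{1..3::nat} = {1,2,3}" by auto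

lemma rho_props:
  "is_perm 3 (rho x y z) \<and> (rho x y z ! 0 < rho x y z ! 1) = (\<not> y) \<and>
   (rho x y z ! 1 < rho x y z ! 2) = (\<not> x) \<and> \<not> tm x y z (rho x y z) 0"
  by (cases x; cases y; cases z) (auto simp: rho_def is_perm_def tm_def three)

lemma finite_Gs: "finite (Gs x y z n)"
  unfolding Gs_def using finite_perms by (rule finite_subset[rotated]) auto

lemma good_step:
  assumes t: "(p, S, rho x y z) \<in> Dom n 3" and g: "good x y z p"
  shows "good x y z (Phi n 3 (p, S, rho x y z))"
proof -
  define q where "q = Phi n 3 (p, S, rho x y z)"
  define r where "r = rho x y z"
  have lq: "length q = n + 3" unfolding q_def using Phi_len[OF t] .
  have lp: "length p = n" using Dom_len[OF t] by blast
  have R1: "(r ! 0 < r ! 1) = (\<not> y)" and R2: "(r ! 1 < r ! 2) = (\<not> x)"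
    and R3: "\<not> tm x y z r 0" unfolding r_def using rho_props[of x y z] by blast+
  have o1: "(q ! a < q ! b) = (p ! a < p ! b)" if "a < n" "b < n" for a b
    unfolding q_def using Phi_ord1[OF t that] .
  have o2: "(q ! (n + a) < q ! (n + b)) = (r ! a < r ! b)" if "a < 3" "b < 3" for a b
    unfolding q_def r_def using Phi_ord2[OF t that] .
  have A: "\<not> tm x y z q j" if j: "Suc (Suc j) < n + 3" for j
  proof -
    consider (a) "Suc (Suc j) < n" | (b) "Suc (Suc j) = n" | (c) "Suc j = n" | (d) "j = n"
      using j by linarith
    then show ?thesis
    proof cases
      case a
      then have "\<not> tm x y z p j" using g lp unfolding good_def by blast
      moreover have "(q ! j < q ! Suc j) = (p ! j < p ! Suc j)" using a by (intro o1) auto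
      moreover have "(q ! Suc j < q ! Suc (Suc j)) = (p ! Suc j < p ! Suc (Suc j))" using a by (intro o1) auto
      moreover have "(q ! j < q ! Suc (Suc j)) = (p ! j < p ! Suc (Suc j))" using a by (intro o1) auto
      ultimately show ?thesis unfolding tm_def by blast
    next
      case b
      have "length p - 2 = j" "length p - 1 = Suc j" using b lp by simp_all
      moreover have "2 \<le> length p" using b lp by simp
      ultimately have "(p ! j < p ! Suc j) = (\<not> x)" using g unfolding good_def by metis
      moreover have "(q ! j < q ! Suc j) = (p ! j < p ! Suc j)" using b by (intro o1) auto
      ultimately show ?thesis unfolding tm_def by blast
    next
      case c
      have "(q ! (n + 0) < q ! (n + 1)) = (r ! 0 < r ! 1)" by (intro o2) auto
      then have "(q ! Suc j < q ! Suc (Suc j)) = (\<not> y)" using c R1 by simp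
      then show ?thesis unfolding tm_def by blast
    next
      case d
      have "(q ! (n + 0) < q ! (n + 1)) = (r ! 0 < r ! 1)" by (intro o2) auto
      moreover have "(q ! (n + 1) < q ! (n + 2)) = (r ! 1 < r ! 2)" by (intro o2) auto
      moreover have "(q ! (n + 0) < q ! (n + 2)) = (r ! 0 < r ! 2)" by (intro o2) auto
      ultimately have "tm x y z q j = tm x y z r 0" unfolding tm_def d
        by (simp add: numeral_2_eq_2)
      then show ?thesis using R3 by simp
    qed
  qed
  have "(q ! (n + 1) < q ! (n + 2)) = (r ! 1 < r ! 2)" by (intro o2) auto
  moreover have "length q - 2 = n + 1" "length q - 1 = n + 2" using lq by simp_all
  ultimately have B: "(q ! (length q - 2) < q ! (length q - 1)) = (\<not> x)" using R2 by simp
  have "good x y z q" unfolding good_def using A B lq by simp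
  then show ?thesis unfolding q_def .
qed

lemma G_step:
  "card (Gs x y z n) * ((n + 3) choose 3) \<le> card (Gs x y z (n + 3))"
proof -
  define T where "T = Gs x y z n \<times> {S. S \<subseteq> {1..n+3} \<and> card S = 3} \<times> {rho x y z}"
  have TD: "T \<subseteq> Dom n 3" unfolding T_def Dom_def Gs_def using rho_props by auto
  have sub: "Phi n 3 ` T \<subseteq> Gs x y z (n + 3)"
  proof
    fix q assume "q \<in> Phi n 3 ` T"
    then obtain p S where pS: "p \<in> Gs x y z n" "S \<subseteq> {1..n+3}" "card S = 3" and
      qe: "q = Phi n 3 (p, S, rho x y z)" unfolding T_def by auto
    have t: "(p, S, rho x y z) \<in> Dom n 3" using TD pS unfolding T_def by auto
    show "q \<in> Gs x y z (n + 3)" using Phi_perm[OF t] good_step[OF t] pS(1) qe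
      unfolding Gs_def by simp
  qed
  have cT: "card T = card (Gs x y z n) * ((n + 3) choose 3)"
    unfolding T_def card_cartesian_product card_Sets by simp
  have "card (Gs x y z n) * ((n + 3) choose 3) = card (Phi n 3 ` T)"
    using card_image[OF inj_on_subset[OF Phi_inj TD]] cT by simp
  also have "\<dots> \<le> card (Gs x y z (n + 3))" by (rule card_mono[OF finite_Gs sub])
  finally show ?thesis .
qed

lemma G_base: "n < 3 \<Longrightarrow> 1 \<le> card (Gs x y z n)"
proof -
  assume n: "n < 3"
  obtain q where "q \<in> Gs x y z n"
  proof -
    consider "n = 0" | "n = 1" | "n = 2" using n by linarith
    then show ?thesis
    proof cases
      case 1
      then show ?thesis using that[of "[]"] by (simp add: Gs_def is_perm_def good_def)
    next
      case 2
      then show ?thesis using that[of "[1]"] by (simp add: Gs_def is_perm_def good_def)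
    next
      case 3
      have "{1..2::nat} = {1,2}" by auto
      then show ?thesis using that[of "if x then [2,1] else [1,2]"] 3
        by (cases x) (simp_all add: Gs_def is_perm_def good_def insert_commute)
    qed
  qed
  then have "Gs x y z n \<noteq> {}" by blast
  then show ?thesis using finite_Gs by (simp add: Suc_le_eq card_gt_0_iff)
qed

lemma G_bound: "fact n / (2 * 6 ^ (n div 3)) \<le> real (card (Gs x y z n))"
proof (induction n rule: less_induct)
  case (less n)
  show ?case
  proof (cases "n < 3")
    case True
    have "fact n \<le> (2::real)"
    proof -
      consider "n = 0" | "n = 1" | "n = 2" using True by linarith
      then show ?thesis by cases (simp_all add: numeral_2_eq_2)
    qed
    moreover have "1 \<le> real (card (Gs x y z n))" using G_base[OF True] by simp
    ultimately show ?thesis using True by simp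
  next
    case False
    define m where "m = n - 3"
    have nm: "n = m + 3" using False m_def by simp
    have ndiv: "n div 3 = Suc (m div 3)" using nm by simp
    have IH: "fact m / (2 * 6 ^ (m div 3)) \<le> real (card (Gs x y z m))"
      using less nm by simp
    have f3: "fact 3 = (6::nat)" by (simp add: eval_nat_numeral)
    have "fact m * (n choose 3) * 6 = (fact n :: nat)" using fact_split[of m 3] nm f3 by simp
    then have fs: "real (fact m) * real (n choose 3) * 6 = fact n"
      by (metis of_nat_fact of_nat_mult of_nat_numeral)
    have "fact n / (2 * 6 ^ (n div 3)) = (fact m / (2 * 6 ^ (m div 3))) * real (n choose 3)"
      unfolding ndiv fs[symmetric] by (simp add: field_simps)
    also have "\<dots> \<le> real (card (Gs x y z m)) * real (n choose 3)"
      using IH by (intro mult_right_mono) auto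
    also have "\<dots> \<le> real (card (Gs x y z n))"
      using G_step[of x y z m] nm by (metis of_nat_le_iff of_nat_mult)
    finally show ?thesis .
  qed
qed

lemma good_avoid:
  assumes i: "Suc (Suc i) < length sigma" "eps ! i" "eps ! Suc i"
    and g: "good (sigma ! i < sigma ! Suc i) (sigma ! Suc i < sigma ! Suc (Suc i)) (sigma ! i < sigma ! Suc (Suc i)) q"
  shows "\<not> contains_gpat q sigma eps"
proof
  assume "contains_gpat q sigma eps"
  then obtain idx where
        i2: "\<forall>a<length sigma. idx a < length q"
    and i3: "\<forall>j. Suc j < length sigma \<longrightarrow> eps ! j \<longrightarrow> idx (Suc j) = Suc (idx j)"
    and i4: "\<forall>a<length sigma. \<forall>b<length sigma. (q ! (idx a) < q ! (idx b)) \<longleftrightarrow> (sigma ! a < sigma ! b)"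
    unfolding contains_gpat_def by blast
  define j where "j = idx i"
  have e1: "idx (Suc i) = Suc j" using i3 i unfolding j_def by simp
  have e2: "idx (Suc (Suc i)) = Suc (Suc j)" using i3 i e1 by simp
  have "Suc (Suc j) < length q" using i2 i e2 by metis
  moreover have "tm (sigma ! i < sigma ! Suc i) (sigma ! Suc i < sigma ! Suc (Suc i)) (sigma ! i < sigma ! Suc (Suc i)) q j"
    unfolding tm_def using i4 i e1 e2 j_def
    by (metis Suc_lessD)
  ultimately show False using g unfolding good_def by blast
qed



lemma six_pow: "2 * 6 ^ Suc m < (64::nat) ^ Suc m"
proof (induction m)
  case 0 then show ?case by simp
next
  case (Suc m)
  have "2 * 6 ^ Suc (Suc m) = 6 * (2 * 6 ^ Suc m :: nat)" by simp
  also have "\<dots> < 6 * 64 ^ Suc m" using Suc by simp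
  also have "\<dots> \<le> 64 * 64 ^ Suc m" by simp
  finally show ?case by simp
qed

theorem mainTheorem3:
  fixes sigma :: "nat list" and eps :: "bool list" and k :: nat
  assumes "k \<ge> 3"
    and "length sigma = k"
    and "is_gen_pattern sigma eps"
    and "\<exists>i. Suc i < k - 1 \<and> eps ! i \<and> eps ! Suc i"
  shows "\<exists>c d :: real. 0 < c \<and> c < 1 \<and> 0 < d \<and> d < 1 \<and>
           (\<forall>n\<ge>k. c ^ n * fact n < real (alpha n sigma eps) \<and>
                    real (alpha n sigma eps) < d ^ n * fact n)"
proof -
  obtain i where i: "Suc i < k - 1" "eps ! i" "eps ! Suc i" using assms(4) by blast
  have i2: "Suc (Suc i) < length sigma" using i assms(2) by simp
  have sp: "is_perm (length sigma) sigma" using assms(3) unfolding is_gen_pattern_def by simp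
  define x where "x = (sigma ! i < sigma ! Suc i)"
  define y where "y = (sigma ! Suc i < sigma ! Suc (Suc i))"
  define z where "z = (sigma ! i < sigma ! Suc (Suc i))"
  define q :: real where "q = 1 - 1 / fact k"
  define d where "d = root (2 * k) q"
  have fk: "(fact k :: real) > 1"
  proof -
    have "(fact 2 :: real) < fact k" using assms(1) by (intro fact_less_mono) auto
    then show ?thesis by (simp add: numeral_2_eq_2)
  qed
  have q0: "0 < q" "q < 1" unfolding q_def using fk by (simp_all add: field_simps)
  have kp: "0 < 2 * k" using assms(1) by simp
  have d0: "0 < d" "d < 1" unfolding d_def using q0 kp by (simp_all add: real_root_gt_zero)
  have dq: "d ^ (2 * k) = q" unfolding d_def using q0 kp by simp
  have alpha_eq: "alpha n sigma eps = card (Av sigma eps n)" for n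
    unfolding alpha_def Av_def by simp
  have GA: "Gs x y z n \<subseteq> Av sigma eps n" for n
    unfolding Gs_def Av_def x_def y_def z_def using good_avoid[OF i2 i(2) i(3)] by blast
  have L: "(1/4) ^ n * fact n < real (alpha n sigma eps)" if n: "k \<le> n" for n
  proof -
    define m where "m = n div 3"
    have m1: "m \<ge> 1" unfolding m_def using n assms(1) by simp
    have "2 * 6 ^ m < (64::nat) ^ m" using six_pow[of "m - 1"] m1 by simp
    also have "(64::nat) ^ m = 4 ^ (3 * m)" by (simp add: power_mult)
    also have "\<dots> \<le> 4 ^ n" unfolding m_def by (intro power_increasing) auto
    finally have pw: "2 * 6 ^ m < (4::nat) ^ n" .
    then have "real (2 * 6 ^ m) < real (4 ^ n)" by (simp only: of_nat_less_iff)
    then have pwr: "2 * 6 ^ m < (4::real) ^ n" by simp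
    have "(1/4) ^ n * fact n = (fact n :: real) / 4 ^ n" by (simp add: power_divide)
    also have "\<dots> < fact n / (2 * 6 ^ m)"
      by (rule divide_strict_left_mono[OF pwr]) auto
    also have "\<dots> \<le> real (card (Gs x y z n))" unfolding m_def by (rule G_bound)
    also have "\<dots> \<le> real (card (Av sigma eps n))"
      using card_mono[OF finite_Av GA] by simp
    finally show "(1/4) ^ n * fact n < real (alpha n sigma eps)" unfolding alpha_eq .
  qed
  have U: "real (alpha n sigma eps) < d ^ n * fact n" if n: "k \<le> n" for n
  proof -
    define M where "M = n div k"
    have "k div k \<le> n div k" by (rule div_le_mono[OF n])
    then have M1: "M \<ge> 1" unfolding M_def using assms(1) by simp
    have "n = k * M + n mod k" unfolding M_def by simp
    moreover have "n mod k < k" using assms(1) by simp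
    moreover have "k \<le> k * M" using M1 by simp
    ultimately have nl: "n < 2 * k * M" by linarith
    have k1: "k \<ge> 1" using assms(1) by simp
    have a1: "real (alpha n sigma eps) \<le> fact n * q ^ M"
      unfolding alpha_eq M_def q_def by (rule Av_bound[OF sp assms(2) k1])
    have a2: "q ^ M = d ^ (2 * k * M)" by (metis dq power_mult)
    have a3: "d ^ (2 * k * M) < d ^ n" by (rule power_strict_decreasing[OF nl d0])
    have "(fact n :: real) > 0" by simp
    then have "fact n * d ^ (2 * k * M) < fact n * d ^ n" using a3 by simp
    moreover have "real (alpha n sigma eps) \<le> fact n * d ^ (2 * k * M)" using a1 a2 by simp
    ultimately have "real (alpha n sigma eps) < fact n * d ^ n" by linarith
    then show ?thesis by (simp add: mult.commute)
  qed
  show ?thesis using L U d0 by (intro exI[of _ "1/4"] exI[of _ d]) auto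
qed

end
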